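(* In the real projective plane, let $\Gamma$ be the degenerate conic given by a pair of distinct lines $g_1,g_2$, and let $\mathcal{C}^*$ be the degenerate dual conic given by a pair of distinct points $C_1,C_2$. Consider polygonal lines inscribed in $\Gamma$ and circumscribed about $\mathcal{C}^*$. Such a polygonal line is periodic with period $n$ if and only if $n=4$ and the lines $g_1$ and $g_2$ intersect the line $C_1C_2$ in a pair of points which is harmonically conjugate to the pair $C_1,C_2$.
   Context: $\mathcal{C}^*$ is the union of the pencils of lines through $C_1$ and through $C_2$. A polygonal line $A_1A_2\dots$ is inscribed in $\Gamma$ and circumscribed about $\mathcal{C}^*$ if its vertices lie alternately on $g_1$ and $g_2$ and its side lines $A_iA_{i+1}$ pass alternately through $C_1$ and $C_2$; it is periodic with period $n$ if $A_{i+n}=A_i$ for all $i$. Points $D_1,D_2$ on the line $C_1C_2$ form a pair harmonically conjugate to $C_1,C_2$ if the cross-ratio $(C_1,C_2;D_1,D_2)$ equals $-1$. *)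

theory Defs
  imports "HOL-Analysis.Analysis"
begin

text \<open>Real projective plane modelled on homogeneous coordinates: a projective point
  is a 1-dimensional linear subspace of real^3, a projective line a 2-dimensional one.
  Incidence is inclusion.\<close>

type_synonym pobj = "(real^3) set"

definition proj_point :: "pobj \<Rightarrow> bool" where
  "proj_point P \<longleftrightarrow> subspace P \<and> dim P = 1"

definition proj_line :: "pobj \<Rightarrow> bool" where
  "proj_line L \<longleftrightarrow> subspace L \<and> dim L = 2"

definition join :: "pobj \<Rightarrow> pobj \<Rightarrow> pobj" where
  "join P Q = span (P \<union> Q)"

definition meet :: "pobj \<Rightarrow> pobj \<Rightarrow> pobj" where
  "meet L M = L \<inter> M"

text \<open>Cross-ratio (C1,C2;D1,D2) = r for four collinear points, with C1, C2 distinct and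
  D1, D2 different from C1, C2: writing D_j = [a_j c1 + b_j c2] for representatives
  c1, c2 of C1, C2, the cross-ratio is (b1 a2)/(a1 b2) (independent of all choices).\<close>
definition cross_ratio_is :: "pobj \<Rightarrow> pobj \<Rightarrow> pobj \<Rightarrow> pobj \<Rightarrow> real \<Rightarrow> bool" where
  "cross_ratio_is C1 C2 D1 D2 r \<longleftrightarrow>
     (\<exists>c1 c2 a1 b1 a2 b2. c1 \<noteq> 0 \<and> c2 \<noteq> 0 \<and> C1 \<noteq> C2 \<and>
        C1 = span {c1} \<and> C2 = span {c2} \<and>
        D1 = span {a1 *\<^sub>R c1 + b1 *\<^sub>R c2} \<and> D2 = span {a2 *\<^sub>R c1 + b2 *\<^sub>R c2} \<and>
        a1 \<noteq> 0 \<and> b1 \<noteq> 0 \<and> a2 \<noteq> 0 \<and> b2 \<noteq> 0 \<and>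
        r = (b1 * a2) / (a1 * b2))"

definition harmonic_pair :: "pobj \<Rightarrow> pobj \<Rightarrow> pobj \<Rightarrow> pobj \<Rightarrow> bool" where
  "harmonic_pair C1 C2 D1 D2 \<longleftrightarrow> cross_ratio_is C1 C2 D1 D2 (-1)"

text \<open>A polygonal line A_0 A_1 ... with A_{2k} on g, A_{2k+1} on h, side A_{2k}A_{2k+1}
  through P and side A_{2k+1}A_{2k+2} through Q; consecutive vertices distinct (so the
  side lines are defined) and consecutive side lines distinct (genuine polygonal line).\<close>
definition alt_polygon :: "pobj \<Rightarrow> pobj \<Rightarrow> pobj \<Rightarrow> pobj \<Rightarrow> (nat \<Rightarrow> pobj) \<Rightarrow> bool" where
  "alt_polygon g h P Q A \<longleftrightarrow>
     (\<forall>i. proj_point (A i)) \<and>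
     (\<forall>i. A i \<noteq> A (Suc i)) \<and>
     (\<forall>i. join (A i) (A (Suc i)) \<noteq> join (A (Suc i)) (A (Suc (Suc i)))) \<and>
     (\<forall>k. A (2*k) \<subseteq> g \<and> A (2*k+1) \<subseteq> h) \<and>
     (\<forall>k. P \<subseteq> join (A (2*k)) (A (2*k+1)) \<and> Q \<subseteq> join (A (2*k+1)) (A (2*k+2)))"

text \<open>Inscribed in g1 \<union> g2 and circumscribed about the pencils through C1, C2:
  vertices alternately on g1, g2 and sides alternately through C1, C2
  (starting with either line and either point).\<close>
definition inscribed_circumscribed ::
  "pobj \<Rightarrow> pobj \<Rightarrow> pobj \<Rightarrow> pobj \<Rightarrow> (nat \<Rightarrow> pobj) \<Rightarrow> bool" where
  "inscribed_circumscribed g1 g2 C1 C2 A \<longleftrightarrow>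
     alt_polygon g1 g2 C1 C2 A \<or> alt_polygon g2 g1 C1 C2 A \<or>
     alt_polygon g1 g2 C2 C1 A \<or> alt_polygon g2 g1 C2 C1 A"

definition has_period :: "(nat \<Rightarrow> pobj) \<Rightarrow> nat \<Rightarrow> bool" where
  "has_period A n \<longleftrightarrow> 0 < n \<and> (\<forall>i. A (i + n) = A i) \<and>
     (\<forall>m. 0 < m \<and> m < n \<longrightarrow> \<not> (\<forall>i. A (i + m) = A i))"

end

theory Submission
  imports Defs
begin


definition par :: "real^3 \<Rightarrow> real^3 \<Rightarrow> bool" where
  "par x y \<longleftrightarrow> (\<exists>c. c \<noteq> 0 \<and> x = c *\<^sub>R y)"

lemma span_sing_mem: "x \<in> span {y} \<longleftrightarrow> (\<exists>c. x = c *\<^sub>R y)"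
  by (auto simp: span_singleton)

lemma span_sing_eq_par:
  fixes x y :: "real^3"
  assumes "x \<noteq> 0" "y \<noteq> 0"
  shows "span {x} = span {y} \<longleftrightarrow> par x y"
proof
  assume h: "span {x} = span {y}"
  have "x \<in> span {y}" using h span_base[of x "{x}"] by auto
  then obtain c where "x = c *\<^sub>R y" by (auto simp: span_sing_mem)
  then show "par x y" using assms unfolding par_def by (metis scale_zero_left)
next
  assume "par x y"
  then obtain c where c: "c \<noteq> 0" "x = c *\<^sub>R y" unfolding par_def by auto
  show "span {x} = span {y}"
  proof
    show "span {x} \<subseteq> span {y}" using c by (auto simp: span_sing_mem)
    show "span {y} \<subseteq> span {x}"
    proof
      fix z assume "z \<in> span {y}"
      then obtain d where "z = d *\<^sub>R y" by (auto simp: span_sing_mem)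
      then have "z = (d / c) *\<^sub>R x" using c by auto
      then show "z \<in> span {x}" by (auto simp: span_sing_mem)
    qed
  qed
qed

lemma span_pair_mem: "x \<in> span {u, w} \<longleftrightarrow> (\<exists>s t. x = s *\<^sub>R u + t *\<^sub>R w)"
  by (auto simp: span_insert span_singleton) (metis add.commute diff_add_cancel, metis add_diff_cancel_left')

lemma join_sing: "join (span {x}) (span {y}) = span {x, y}"
proof -
  have "span (span {x} \<union> span {y}) = span ({x} \<union> {y})"
  proof
    show "span (span {x} \<union> span {y}) \<subseteq> span ({x} \<union> {y})"
    proof (rule span_minimal)
      show "span {x} \<union> span {y} \<subseteq> span ({x} \<union> {y})"
        by (metis Un_least span_mono sup.cobounded1 sup.cobounded2)
    qed simp
    show "span ({x} \<union> {y}) \<subseteq> span (span {x} \<union> span {y})"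
      by (intro span_mono) (auto intro: span_base)
  qed
  then show ?thesis by (simp add: join_def insert_commute)
qed

lemma proj_point_rep:
  assumes "proj_point P" shows "\<exists>p. p \<noteq> 0 \<and> P = span {p}"
proof -
  have sP: "subspace P" and dP: "dim P = 1" using assms by (auto simp: proj_point_def)
  obtain B where B: "B \<subseteq> P" "independent B" "P \<subseteq> span B" "card B = dim P"
    using basis_exists[of P] by metis
  then obtain p where "B = {p}" using dP B(4) by (metis card_1_singletonE)
  moreover have "p \<noteq> 0" using B(2) \<open>B = {p}\<close> dependent_zero by blast
  moreover have "P = span {p}" using B \<open>B = {p}\<close> sP span_minimal by blast
  ultimately show ?thesis by blast
qed

lemma proj_line_rep:
  assumes "proj_line L" shows "\<exists>a. a \<noteq> 0 \<and> L = {x. a \<bullet> x = 0}"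
proof -
  have sL: "subspace L" and dL: "dim L = 2" using assms by (auto simp: proj_line_def)
  define N where "N = {y \<in> UNIV. \<forall>x \<in> L. orthogonal x y}"
  have "dim N + dim L = dim (UNIV :: (real^3) set)"
    unfolding N_def by (rule dim_subspace_orthogonal_to_vectors) (auto simp: sL)
  then have dN: "dim N = 1" using dL by simp
  have sN: "subspace N" unfolding N_def orthogonal_def
    by (auto simp: subspace_def inner_add_right)
  obtain a where a: "a \<noteq> 0" "N = span {a}" using proj_point_rep[of N] sN dN by (auto simp: proj_point_def)
  have sub: "L \<subseteq> {x. a \<bullet> x = 0}"
  proof
    fix x assume "x \<in> L"
    moreover have "a \<in> N" using a span_base by blast
    ultimately show "x \<in> {x. a \<bullet> x = 0}" unfolding N_def orthogonal_def by (auto simp: inner_commute)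
  qed
  have sH: "subspace {x. a \<bullet> x = 0}" by (auto simp: subspace_def inner_add_right)
  have "dim {y \<in> UNIV. \<forall>x \<in> span {a}. orthogonal x y} + dim (span {a}) = dim (UNIV :: (real^3) set)"
    by (rule dim_subspace_orthogonal_to_vectors) auto
  moreover have "{y \<in> UNIV. \<forall>x \<in> span {a}. orthogonal x y} = {x. a \<bullet> x = 0}"
    using span_base[of a "{a}"] by (auto simp: span_sing_mem orthogonal_def)
  ultimately have "dim {x. a \<bullet> x = 0} = 2" using a by simp
  then have "L = {x. a \<bullet> x = 0}" using subspace_dim_equal[OF sL sH sub] dL by simp
  then show ?thesis using a by blast
qed

lemma sub_line_iff:
  "span {x} \<subseteq> {y. a \<bullet> y = 0} \<longleftrightarrow> a \<bullet> x = 0"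
proof
  assume "span {x} \<subseteq> {y. a \<bullet> y = 0}"
  moreover have "x \<in> span {x}" by (rule span_base) simp
  ultimately show "a \<bullet> x = 0" by blast
qed (auto simp: span_sing_mem)



lemma step:
  fixes a b u w p :: "real^3"
  assumes "a \<bullet> u = 0" "a \<bullet> p \<noteq> 0" "b \<bullet> w = 0" "b \<bullet> p \<noteq> 0" "p \<in> span {u, w}"
  shows "b \<bullet> u \<noteq> 0 \<and> par ((b \<bullet> p) *\<^sub>R u - (b \<bullet> u) *\<^sub>R p) w"
proof -
  obtain s t where st: "p = s *\<^sub>R u + t *\<^sub>R w" using assms(5) span_pair_mem by blast
  have bp: "b \<bullet> p = s * (b \<bullet> u)" using st assms(3) by (simp add: inner_add_right)
  have bu: "b \<bullet> u \<noteq> 0" using bp assms(4) by auto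
  have t: "t \<noteq> 0"
  proof
    assume "t = 0"
    then have "a \<bullet> p = 0" using st assms(1) by (simp add: inner_add_right)
    then show False using assms(2) by simp
  qed
  have "(b \<bullet> p) *\<^sub>R u - (b \<bullet> u) *\<^sub>R p = (-(b \<bullet> u) * t) *\<^sub>R w"
    using st bp by (simp add: algebra_simps)
  then show ?thesis using bu t unfolding par_def by (intro conjI bu exI[of _ "-(b \<bullet> u) * t"]) auto
qed

lemma par_sym: "par x y \<Longrightarrow> par y x"
proof -
  assume "par x y"
  then obtain c where c: "c \<noteq> 0" "x = c *\<^sub>R y" unfolding par_def by auto
  then have "y = (1 / c) *\<^sub>R x" by simp
  then show "par y x" using c unfolding par_def by (intro exI[of _ "1/c"]) simp
qed

lemma par_trans: "par x y \<Longrightarrow> par y z \<Longrightarrow> par x z"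
  unfolding par_def by (metis mult_eq_0_iff scaleR_scaleR)

lemma par_lin:
  assumes "par x y" "\<And>c z. T (c *\<^sub>R z) = c *\<^sub>R T z"
  shows "par (T x) (T y)"
  using assms unfolding par_def by metis

lemma par_refl: "par x x"
  unfolding par_def by (intro exI[of _ 1]) simp

lemma par_scale: "c \<noteq> 0 \<Longrightarrow> par (c *\<^sub>R x) x"
  unfolding par_def by blast

fun ccf :: "real \<Rightarrow> real \<Rightarrow> nat \<Rightarrow> real" where
  "ccf al mu 0 = 0"
| "ccf al mu (Suc k) = al ^ k + mu * ccf al mu k"

lemma ccf_diff: "(mu - al) * ccf al mu k = mu ^ k - al ^ k"
proof (induction k)
  case (Suc k)
  have "(mu - al) * ccf al mu (Suc k) = (mu - al) * al ^ k + mu * ((mu - al) * ccf al mu k)"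
    by (simp add: algebra_simps)
  also have "\<dots> = (mu - al) * al ^ k + mu * (mu ^ k - al ^ k)" by (simp only: Suc.IH)
  also have "\<dots> = mu ^ Suc k - al ^ Suc k" by (simp add: algebra_simps)
  finally show ?case .
qed simp

lemma ccf_same: "ccf al al k = real k * al ^ (k - 1)"
proof (induction k)
  case (Suc k) then show ?case by (cases k) (auto simp: algebra_simps)
qed simp

lemma ccf_zero:
  assumes "al \<noteq> 0" "mu \<noteq> 0" "k \<ge> 1" "ccf al mu k = 0"
  shows "mu = - al"
proof (cases "mu = al")
  case True
  then show ?thesis using assms ccf_same[of al k] by simp
next
  case False
  then have "mu ^ k = al ^ k" using ccf_diff[of mu al k] assms(4) by simp
  then have "\<bar>mu\<bar> ^ k = \<bar>al\<bar> ^ k" by (metis power_abs)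
  then have "\<bar>mu\<bar> = \<bar>al\<bar>" using assms(3) by (metis abs_ge_zero not_one_le_zero power_eq_imp_eq_base le_zero_eq not_gr0)
  then show ?thesis using False by (auto simp: abs_if split: if_splits)
qed



lemma core:
  fixes a b p q :: "real^3" and A :: "nat \<Rightarrow> (real^3) set" and v :: "nat \<Rightarrow> real^3"
  assumes ap: "a \<bullet> p \<noteq> 0" and bp: "b \<bullet> p \<noteq> 0" and aq: "a \<bullet> q \<noteq> 0" and bq: "b \<bullet> q \<noteq> 0"
    and v: "\<And>i. v i \<noteq> 0" "\<And>i. A i = span {v i}"
    and onl: "\<And>k. a \<bullet> v (2*k) = 0" "\<And>k. b \<bullet> v (2*k+1) = 0"
    and thr: "\<And>k. p \<in> span {v (2*k), v (2*k+1)}" "\<And>k. q \<in> span {v (2*k+1), v (2*k+2)}"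
    and sides: "\<And>i. join (A i) (A (Suc i)) \<noteq> join (A (Suc i)) (A (Suc (Suc i)))"
  shows "has_period A n \<longleftrightarrow> n = 4 \<and> (a \<bullet> p) * (b \<bullet> q) + (a \<bullet> q) * (b \<bullet> p) = 0"
proof -
  define T1 where "T1 x = (b \<bullet> p) *\<^sub>R x - (b \<bullet> x) *\<^sub>R p" for x
  define T2 where "T2 y = (a \<bullet> q) *\<^sub>R y - (a \<bullet> y) *\<^sub>R q" for y
  define M where "M x = T2 (T1 x)" for x
  define al where "al = (a \<bullet> q) * (b \<bullet> p)"
  define mu where "mu = (a \<bullet> p) * (b \<bullet> q)"
  define r where "r = (a \<bullet> p) *\<^sub>R q - (a \<bullet> q) *\<^sub>R p"
  have al0: "al \<noteq> 0" and mu0: "mu \<noteq> 0" using ap bp aq bq by (auto simp: al_def mu_def)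
  have T1l: "T1 (c *\<^sub>R z) = c *\<^sub>R T1 z" for c z by (simp add: T1_def algebra_simps)
  have T2l: "T2 (c *\<^sub>R z) = c *\<^sub>R T2 z" for c z by (simp add: T2_def algebra_simps)
  have Ml: "M (c *\<^sub>R z) = c *\<^sub>R M z" for c z by (simp add: M_def T1l T2l)
  have ar: "a \<bullet> r = 0" by (simp add: r_def inner_diff_right algebra_simps)
  have br: "b \<bullet> r = mu - al" by (simp add: r_def inner_diff_right al_def mu_def algebra_simps)
  have Mform: "M x = al *\<^sub>R x + (b \<bullet> x) *\<^sub>R r" if "a \<bullet> x = 0" for x
    using that by (simp add: M_def T1_def T2_def r_def al_def inner_diff_right algebra_simps)
  have F1: "b \<bullet> v (2*k) \<noteq> 0 \<and> par (T1 (v (2*k))) (v (2*k+1))" for k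
    unfolding T1_def by (rule step[OF onl(1) ap onl(2) bp thr(1)])
  have F2: "a \<bullet> v (2*k+1) \<noteq> 0 \<and> par (T2 (v (2*k+1))) (v (2*k+2))" for k
  proof -
    have "a \<bullet> v (2*k+2) = 0" using onl(1)[of "Suc k"] by simp
    then show ?thesis unfolding T2_def by (rule step[OF onl(2) bq _ aq thr(2)])
  qed
  have F3: "par (v (2*k+2)) (M (v (2*k)))" for k
  proof -
    have "par (v (2*k+1)) (T1 (v (2*k)))" using F1 par_sym by blast
    then have "par (T2 (v (2*k+1))) (M (v (2*k)))" unfolding M_def by (rule par_lin[OF _ T2l])
    moreover have "par (v (2*k+2)) (T2 (v (2*k+1)))" using F2[of k] par_sym by blast
    ultimately show ?thesis using par_trans by blast
  qed
  have Aeq: "A i = A j \<longleftrightarrow> par (v i) (v j)" for i j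
    using span_sing_eq_par[OF v(1) v(1)] v(2) by simp
  have odd: "A (2*k+1) \<noteq> A 0" for k
  proof
    assume "A (2*k+1) = A 0"
    then obtain c where "v 0 = c *\<^sub>R v (2*k+1)" using Aeq par_sym unfolding par_def by blast
    then have "b \<bullet> v 0 = 0" using onl(2)[of k] by simp
    then show False using F1[of 0] by simp
  qed
  have two: "A 2 \<noteq> A 0"
  proof
    assume "A 2 = A 0"
    then have "join (A 1) (A 2) = join (A 0) (A 1)" by (simp add: join_def Un_commute)
    then show False using sides[of 0] by (simp add: numeral_2_eq_2)
  qed
  have rnp: "r \<noteq> t *\<^sub>R v 0" for t
  proof
    assume rt: "r = t *\<^sub>R v 0"
    have "M (v 0) = (al + (b \<bullet> v 0) * t) *\<^sub>R v 0"
      using Mform[OF onl(1)[of 0, simplified]] rt by (simp add: algebra_simps)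
    moreover obtain c where c: "c \<noteq> 0" "v 2 = c *\<^sub>R M (v 0)" using F3[of 0] unfolding par_def by (auto simp: numeral_2_eq_2)
    ultimately have e: "v 2 = (c * (al + (b \<bullet> v 0) * t)) *\<^sub>R v 0" by simp
    then have "c * (al + (b \<bullet> v 0) * t) \<noteq> 0" using v(1)[of 2] by auto
    then have "par (v 2) (v 0)" using e unfolding par_def by blast
    then show False using two Aeq by blast
  qed
  define u where "u k = al ^ k *\<^sub>R v 0 + ((b \<bullet> v 0) * ccf al mu k) *\<^sub>R r" for k
  have au: "a \<bullet> u k = 0" for k using onl(1)[of 0] ar by (simp add: u_def inner_add_right)
  have Mu: "M (u k) = u (Suc k)" for k
  proof -
    have "M (u k) = al *\<^sub>R u k + (b \<bullet> u k) *\<^sub>R r" by (rule Mform[OF au])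
    also have "b \<bullet> u k = al ^ k * (b \<bullet> v 0) + (b \<bullet> v 0) * ccf al mu k * (mu - al)"
      by (simp add: u_def inner_add_right br)
    finally show ?thesis by (simp add: u_def algebra_simps)
  qed
  have seq: "par (v (2*k)) (u k)" for k
  proof (induction k)
    case 0 then show ?case by (simp add: u_def par_refl)
  next
    case (Suc k)
    have "par (M (v (2*k))) (M (u k))" by (rule par_lin[OF Suc Ml])
    then have "par (v (2*k+2)) (u (Suc k))" using par_trans[OF F3[of k]] Mu by simp
    then show ?case by simp
  qed
  have evn: "mu = - al" if "A (2*k) = A 0" "k \<ge> 1" for k
  proof -
    have "par (v (2*k)) (v 0)" using that(1) Aeq[of "2*k" 0] by simp
    then have "par (u k) (v 0)" by (rule par_trans[OF par_sym[OF seq[of k]]])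
    then obtain s where s: "u k = s *\<^sub>R v 0" unfolding par_def by auto
    have "ccf al mu k = 0"
    proof (rule ccontr)
      assume cne: "ccf al mu k \<noteq> 0"
      have E: "((b \<bullet> v 0) * ccf al mu k) *\<^sub>R r = (s - al ^ k) *\<^sub>R v 0"
        using s by (simp add: u_def algebra_simps)
      have nz: "(b \<bullet> v 0) * ccf al mu k \<noteq> 0" using cne F1[of 0] by simp
      have "r = (1 / ((b \<bullet> v 0) * ccf al mu k)) *\<^sub>R (((b \<bullet> v 0) * ccf al mu k) *\<^sub>R r)"
        using nz by simp
      also have "\<dots> = (1 / ((b \<bullet> v 0) * ccf al mu k)) *\<^sub>R ((s - al ^ k) *\<^sub>R v 0)"
        by (simp only: E)
      also have "\<dots> = ((s - al ^ k) / ((b \<bullet> v 0) * ccf al mu k)) *\<^sub>R v 0" by simp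
      finally have "r = ((s - al ^ k) / ((b \<bullet> v 0) * ccf al mu k)) *\<^sub>R v 0" .
      then show False using rnp by blast
    qed
    then show ?thesis using ccf_zero[OF al0 mu0 that(2)] by simp
  qed
  have per4: "\<forall>i. A (i + 4) = A i" if E: "mu = - al"
  proof -
    have MM: "M (M x) = (al * al) *\<^sub>R x" if "a \<bullet> x = 0" for x
    proof -
      have "a \<bullet> M x = 0" using Mform[OF that] that ar by (simp add: inner_add_right)
      then have "M (M x) = al *\<^sub>R M x + (b \<bullet> M x) *\<^sub>R r" by (rule Mform)
      also have "b \<bullet> M x = mu * (b \<bullet> x)" using Mform[OF that] br by (simp add: inner_add_right algebra_simps flip: distrib_right)
      finally show ?thesis using Mform[OF that] E by (simp add: algebra_simps)
    qed
    have ev4: "par (v (2*k+4)) (v (2*k))" for k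
    proof -
      have e: "2*k+4 = 2*(k+1)+2" "2*k+2 = 2*(k+1)" by simp_all
      have "par (v (2*k+4)) (M (v (2*k+2)))" unfolding e by (rule F3)
      moreover have "par (M (v (2*k+2))) (M (M (v (2*k))))" by (rule par_lin[OF F3 Ml])
      moreover have "M (M (v (2*k))) = (al * al) *\<^sub>R v (2*k)" by (rule MM[OF onl(1)])
      moreover have "par ((al * al) *\<^sub>R v (2*k)) (v (2*k))" using al0 by (intro par_scale) simp
      ultimately show ?thesis by (metis par_trans)
    qed
    have od4: "par (v (2*k+5)) (v (2*k+1))" for k
    proof -
      have e: "2*k+5 = 2*(k+2)+1" "2*k+4 = 2*(k+2)" by simp_all
      have "par (v (2*k+5)) (T1 (v (2*k+4)))" unfolding e using F1[of "k+2"] par_sym by blast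
      moreover have "par (T1 (v (2*k+4))) (T1 (v (2*k)))" by (rule par_lin[OF ev4 T1l])
      moreover have "par (T1 (v (2*k))) (v (2*k+1))" using F1[of k] by blast
      ultimately show ?thesis by (meson par_trans)
    qed
    show ?thesis
    proof
      fix i
      show "A (i + 4) = A i"
      proof (cases "even i")
        case True
        then obtain k where "i = 2*k" by (auto elim: evenE)
        then show ?thesis using ev4[of k] Aeq by (simp add: add.commute)
      next
        case False
        then obtain k where "i = 2*k+1" by (auto elim: oddE)
        then show ?thesis using od4[of k] Aeq by (simp add: algebra_simps)
      qed
    qed
  qed
  have Eiff: "(a \<bullet> p) * (b \<bullet> q) + (a \<bullet> q) * (b \<bullet> p) = 0 \<longleftrightarrow> mu = - al"
    by (auto simp: mu_def al_def)
  show ?thesis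
  proof
    assume hp: "has_period A n"
    then have n0: "0 < n" and pn: "A (0 + n) = A 0" unfolding has_period_def by blast+
    have "even n"
    proof (rule ccontr)
      assume "odd n"
      then obtain k where "n = 2*k+1" by (auto elim: oddE)
      then show False using pn odd by simp
    qed
    then obtain k where nk: "n = 2*k" by (auto elim: evenE)
    then have "k \<ge> 1" using n0 by simp
    then have E: "mu = - al" using evn[of k] pn nk by simp
    have H: "\<not> (\<forall>i. A (i + m) = A i)" if "0 < m" "m < n" for m
      using hp that unfolding has_period_def by blast
    have "n \<le> 4"
    proof (rule ccontr)
      assume "\<not> n \<le> 4"
      then show False using H[of 4] per4[OF E] by simp
    qed
    moreover have "n \<noteq> 2" using pn two by auto
    ultimately have "n = 4" using nk n0 by auto
    then show "n = 4 \<and> (a \<bullet> p) * (b \<bullet> q) + (a \<bullet> q) * (b \<bullet> p) = 0" using E Eiff by simp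
  next
    assume h: "n = 4 \<and> (a \<bullet> p) * (b \<bullet> q) + (a \<bullet> q) * (b \<bullet> p) = 0"
    then have E: "mu = - al" and n4: "n = 4" using Eiff by auto
    have "\<not> (\<forall>i. A (i + m) = A i)" if "0 < m" "m < 4" for m
    proof -
      have "m = 1 \<or> m = 2 \<or> m = 3" using that by auto
      moreover have "A 1 \<noteq> A 0" using odd[of 0] by simp
      moreover have "A 3 \<noteq> A 0" using odd[of 1] by simp
      ultimately show ?thesis
      proof (elim disjE)
        assume "m = 1" "A 1 \<noteq> A 0" "A 3 \<noteq> A 0"
        show ?thesis
        proof
          assume "\<forall>i. A (i + m) = A i"
          then have "A (0 + m) = A 0" by (rule spec)
          then show False using \<open>m = 1\<close> \<open>A 1 \<noteq> A 0\<close> by simp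
        qed
      next
        assume "m = 2"
        show ?thesis
        proof
          assume "\<forall>i. A (i + m) = A i"
          then have "A (0 + m) = A 0" by (rule spec)
          then show False using \<open>m = 2\<close> two by (simp add: numeral_2_eq_2)
        qed
      next
        assume "m = 3" "A 1 \<noteq> A 0" "A 3 \<noteq> A 0"
        show ?thesis
        proof
          assume "\<forall>i. A (i + m) = A i"
          then have "A (0 + m) = A 0" by (rule spec)
          then show False using \<open>m = 3\<close> \<open>A 3 \<noteq> A 0\<close> by simp
        qed
      qed
    qed
    then show "has_period A n" unfolding has_period_def using per4[OF E] n4 by simp
  qed
qed



lemma alt_core:
  fixes a b p q :: "real^3" and A :: "nat \<Rightarrow> (real^3) set"
  assumes alt: "alt_polygon {x. a \<bullet> x = 0} {x. b \<bullet> x = 0} (span {p}) (span {q}) A"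
    and ap: "a \<bullet> p \<noteq> 0" and bp: "b \<bullet> p \<noteq> 0" and aq: "a \<bullet> q \<noteq> 0" and bq: "b \<bullet> q \<noteq> 0"
  shows "has_period A n \<longleftrightarrow> n = 4 \<and> (a \<bullet> p) * (b \<bullet> q) + (a \<bullet> q) * (b \<bullet> p) = 0"
proof -
  define v where "v i = (SOME w. w \<noteq> 0 \<and> A i = span {w})" for i
  have vp: "v i \<noteq> 0 \<and> A i = span {v i}" for i
  proof -
    have "proj_point (A i)" using alt unfolding alt_polygon_def by blast
    then have "\<exists>w. w \<noteq> 0 \<and> A i = span {w}" by (rule proj_point_rep)
    then show ?thesis unfolding v_def by (rule someI_ex)
  qed
  have v1: "v i \<noteq> 0" and v2: "A i = span {v i}" for i using vp by auto
  have onl1: "a \<bullet> v (2*k) = 0" for k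
    using alt v2[of "2*k"] sub_line_iff unfolding alt_polygon_def by metis
  have onl2: "b \<bullet> v (2*k+1) = 0" for k
    using alt v2[of "2*k+1"] sub_line_iff unfolding alt_polygon_def by metis
  have thr1: "p \<in> span {v (2*k), v (2*k+1)}" for k
  proof -
    have "span {p} \<subseteq> join (A (2*k)) (A (2*k+1))" using alt unfolding alt_polygon_def by blast
    then show ?thesis using v2 join_sing span_base[of p "{p}"] by auto
  qed
  have thr2: "q \<in> span {v (2*k+1), v (2*k+2)}" for k
  proof -
    have "span {q} \<subseteq> join (A (2*k+1)) (A (2*k+2))" using alt unfolding alt_polygon_def by blast
    then show ?thesis using v2 join_sing span_base[of q "{q}"] by auto
  qed
  have sides: "join (A i) (A (Suc i)) \<noteq> join (A (Suc i)) (A (Suc (Suc i)))" for i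
    using alt unfolding alt_polygon_def by blast
  show ?thesis
    by (rule core[OF ap bp aq bq v1 v2 onl1 onl2 thr1 thr2 sides])
qed

lemma indep2:
  fixes p q :: "real^3"
  assumes "p \<noteq> 0" "q \<noteq> 0" "span {p} \<noteq> span {q}" "x *\<^sub>R p + y *\<^sub>R q = 0"
  shows "x = 0 \<and> y = 0"
proof -
  have "y = 0"
  proof (rule ccontr)
    assume y: "y \<noteq> 0"
    then have q: "q = (- x / y) *\<^sub>R p" using assms(4)
      by (metis (no_types, lifting) add_eq_0_iff divide_inverse_commute inverse_eq_divide
          scaleR_minus_left scaleR_scaleR scaleR_left_commute scaleR_one right_inverse mult_minus_left)
    then have "- x / y \<noteq> 0" using assms(2) by auto
    then have "par q p" using q unfolding par_def by blast
    then show False using span_sing_eq_par[OF assms(2,1)] assms(3) by simp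
  qed
  then show ?thesis using assms by simp
qed

lemma meet_eq:
  fixes a p q :: "real^3"
  assumes ap: "a \<bullet> p \<noteq> 0"
  shows "meet {x. a \<bullet> x = 0} (join (span {p}) (span {q})) = span {(- (a \<bullet> q)) *\<^sub>R p + (a \<bullet> p) *\<^sub>R q}"
    (is "_ = span {?r}")
proof -
  have "x \<in> {x. a \<bullet> x = 0} \<inter> span {p, q} \<longleftrightarrow> x \<in> span {?r}" for x
  proof
    assume "x \<in> {x. a \<bullet> x = 0} \<inter> span {p, q}"
    then obtain s t where x: "x = s *\<^sub>R p + t *\<^sub>R q" and ax: "a \<bullet> x = 0"
      using span_pair_mem by blast
    then have "s * (a \<bullet> p) + t * (a \<bullet> q) = 0" by (simp add: inner_add_right)
    then have s: "s = - t * (a \<bullet> q) / (a \<bullet> p)" using ap by (simp add: field_simps)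
    have "x = (t / (a \<bullet> p)) *\<^sub>R ?r" using x s ap by (simp add: algebra_simps)
    then show "x \<in> span {?r}" by (auto simp: span_sing_mem)
  next
    assume "x \<in> span {?r}"
    then obtain c where x: "x = c *\<^sub>R ?r" by (auto simp: span_sing_mem)
    have "a \<bullet> ?r = 0" by (simp add: inner_add_right algebra_simps)
    then have "a \<bullet> x = 0" using x by simp
    moreover have "x \<in> span {p, q}" using x span_pair_mem[of x p q]
      by (metis scaleR_right_distrib scaleR_scaleR)
    ultimately show "x \<in> {x. a \<bullet> x = 0} \<inter> span {p, q}" by simp
  qed
  then show ?thesis by (auto simp: meet_def join_sing)
qed

lemma harm:
  fixes a b p q :: "real^3"
  assumes p0: "p \<noteq> 0" and q0: "q \<noteq> 0" and pq: "span {p} \<noteq> span {q}"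
    and ap: "a \<bullet> p \<noteq> 0" and bp: "b \<bullet> p \<noteq> 0" and aq: "a \<bullet> q \<noteq> 0" and bq: "b \<bullet> q \<noteq> 0"
  shows "harmonic_pair (span {p}) (span {q}) (meet {x. a \<bullet> x = 0} (join (span {p}) (span {q})))
           (meet {x. b \<bullet> x = 0} (join (span {p}) (span {q})))
         \<longleftrightarrow> (a \<bullet> p) * (b \<bullet> q) + (a \<bullet> q) * (b \<bullet> p) = 0"
proof
  assume E: "(a \<bullet> p) * (b \<bullet> q) + (a \<bullet> q) * (b \<bullet> p) = 0"
  have r: "(a \<bullet> p) * (- (b \<bullet> q)) / ((- (a \<bullet> q)) * (b \<bullet> p)) = -1"
  proof -
    have "(a \<bullet> p) * (- (b \<bullet> q)) = - ((- (a \<bullet> q)) * (b \<bullet> p))" using E by simp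
    then show ?thesis using aq bp by (simp add: divide_simps)
  qed
  show "harmonic_pair (span {p}) (span {q}) (meet {x. a \<bullet> x = 0} (join (span {p}) (span {q})))
           (meet {x. b \<bullet> x = 0} (join (span {p}) (span {q})))"
    unfolding harmonic_pair_def cross_ratio_is_def meet_eq[OF ap] meet_eq[OF bp]
    by (intro exI[of _ p] exI[of _ q] exI[of _ "- (a \<bullet> q)"] exI[of _ "a \<bullet> p"]
        exI[of _ "- (b \<bullet> q)"] exI[of _ "b \<bullet> p"]) (use p0 q0 pq ap bp aq bq r in auto)
next
  assume "harmonic_pair (span {p}) (span {q}) (meet {x. a \<bullet> x = 0} (join (span {p}) (span {q})))
           (meet {x. b \<bullet> x = 0} (join (span {p}) (span {q})))"
  then obtain c1 c2 a1 b1 a2 b2 where h: "c1 \<noteq> 0" "c2 \<noteq> 0" "span {p} = span {c1}" "span {q} = span {c2}"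
    "span {(- (a \<bullet> q)) *\<^sub>R p + (a \<bullet> p) *\<^sub>R q} = span {a1 *\<^sub>R c1 + b1 *\<^sub>R c2}"
    "span {(- (b \<bullet> q)) *\<^sub>R p + (b \<bullet> p) *\<^sub>R q} = span {a2 *\<^sub>R c1 + b2 *\<^sub>R c2}"
    "a1 \<noteq> 0" "b1 \<noteq> 0" "a2 \<noteq> 0" "b2 \<noteq> 0" "-1 = (b1 * a2) / (a1 * b2)"
    unfolding harmonic_pair_def cross_ratio_is_def meet_eq[OF ap] meet_eq[OF bp] by metis
  have "c1 \<in> span {p}" using h(3) span_base[of c1 "{c1}"] by simp
  then obtain s where s: "c1 = s *\<^sub>R p" by (auto simp: span_sing_mem)
  have "c2 \<in> span {q}" using h(4) span_base[of c2 "{c2}"] by simp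
  then obtain t where t: "c2 = t *\<^sub>R q" by (auto simp: span_sing_mem)
  have s0: "s \<noteq> 0" using s h(1) by auto
  have t0: "t \<noteq> 0" using t h(2) by auto
  have "a1 *\<^sub>R c1 + b1 *\<^sub>R c2 \<in> span {(- (a \<bullet> q)) *\<^sub>R p + (a \<bullet> p) *\<^sub>R q}"
    using h(5) span_base[of "a1 *\<^sub>R c1 + b1 *\<^sub>R c2"] by simp
  then obtain m where m: "a1 *\<^sub>R c1 + b1 *\<^sub>R c2 = m *\<^sub>R ((- (a \<bullet> q)) *\<^sub>R p + (a \<bullet> p) *\<^sub>R q)"
    by (auto simp: span_sing_mem)
  have "(a1 * s + m * (a \<bullet> q)) *\<^sub>R p + (b1 * t - m * (a \<bullet> p)) *\<^sub>R q = 0"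
    using m s t by (simp add: algebra_simps)
  then have "a1 * s + m * (a \<bullet> q) = 0 \<and> b1 * t - m * (a \<bullet> p) = 0" by (rule indep2[OF p0 q0 pq])
  then have m1: "a1 * s = - m * (a \<bullet> q)" and m2: "b1 * t = m * (a \<bullet> p)" by linarith+
  have "a2 *\<^sub>R c1 + b2 *\<^sub>R c2 \<in> span {(- (b \<bullet> q)) *\<^sub>R p + (b \<bullet> p) *\<^sub>R q}"
    using h(6) span_base[of "a2 *\<^sub>R c1 + b2 *\<^sub>R c2"] by simp
  then obtain k where k: "a2 *\<^sub>R c1 + b2 *\<^sub>R c2 = k *\<^sub>R ((- (b \<bullet> q)) *\<^sub>R p + (b \<bullet> p) *\<^sub>R q)"
    by (auto simp: span_sing_mem)
  have "(a2 * s + k * (b \<bullet> q)) *\<^sub>R p + (b2 * t - k * (b \<bullet> p)) *\<^sub>R q = 0"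
    using k s t by (simp add: algebra_simps)
  then have "a2 * s + k * (b \<bullet> q) = 0 \<and> b2 * t - k * (b \<bullet> p) = 0" by (rule indep2[OF p0 q0 pq])
  then have k1: "a2 * s = - k * (b \<bullet> q)" and k2: "b2 * t = k * (b \<bullet> p)" by linarith+
  have m0: "m \<noteq> 0" using m2 h(8) t0 by auto
  have k0: "k \<noteq> 0" using k2 h(10) t0 by auto
  have "b1 * a2 = - (a1 * b2)" using h(11) h(7) h(10) by (simp add: field_simps split: if_splits)
  then have "(b1 * t) * (a2 * s) = - ((a1 * s) * (b2 * t))"
  proof -
    assume eq: "b1 * a2 = - (a1 * b2)"
    have "(b1 * t) * (a2 * s) = (b1 * a2) * (s * t)" by (simp add: ac_simps)
    also have "\<dots> = (- (a1 * b2)) * (s * t)" using eq by simp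
    also have "\<dots> = - ((a1 * s) * (b2 * t))" by (simp add: ac_simps)
    finally show ?thesis .
  qed
  then have "(m * (a \<bullet> p)) * (- k * (b \<bullet> q)) = - ((- m * (a \<bullet> q)) * (k * (b \<bullet> p)))"
    by (simp only: m1 m2 k1 k2)
  then have "(m * k) * ((a \<bullet> p) * (b \<bullet> q) + (a \<bullet> q) * (b \<bullet> p)) = 0" by (simp add: algebra_simps)
  then show "(a \<bullet> p) * (b \<bullet> q) + (a \<bullet> q) * (b \<bullet> p) = 0" using m0 k0 by simp
qed


theorem theorem3p15:
  fixes g1 g2 C1 C2 :: "(real^3) set" and A :: "nat \<Rightarrow> (real^3) set" and n :: nat
  assumes "proj_line g1" and "proj_line g2" and "g1 \<noteq> g2"
    and "proj_point C1" and "proj_point C2" and "C1 \<noteq> C2"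
    and "\<not> C1 \<subseteq> g1" and "\<not> C1 \<subseteq> g2" and "\<not> C2 \<subseteq> g1" and "\<not> C2 \<subseteq> g2"
    and "inscribed_circumscribed g1 g2 C1 C2 A"
  shows "has_period A n \<longleftrightarrow>
           (n = 4 \<and> harmonic_pair C1 C2 (meet g1 (join C1 C2)) (meet g2 (join C1 C2)))"
proof -
  obtain a1 where a1: "a1 \<noteq> 0" "g1 = {x. a1 \<bullet> x = 0}" using proj_line_rep[OF assms(1)] by blast
  obtain a2 where a2: "a2 \<noteq> 0" "g2 = {x. a2 \<bullet> x = 0}" using proj_line_rep[OF assms(2)] by blast
  obtain c1 where c1: "c1 \<noteq> 0" "C1 = span {c1}" using proj_point_rep[OF assms(4)] by blast
  obtain c2 where c2: "c2 \<noteq> 0" "C2 = span {c2}" using proj_point_rep[OF assms(5)] by blast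
  have n11: "a1 \<bullet> c1 \<noteq> 0" using assms(7) unfolding a1(2) c1(2) sub_line_iff .
  have n21: "a2 \<bullet> c1 \<noteq> 0" using assms(8) unfolding a2(2) c1(2) sub_line_iff .
  have n12: "a1 \<bullet> c2 \<noteq> 0" using assms(9) unfolding a1(2) c2(2) sub_line_iff .
  have n22: "a2 \<bullet> c2 \<noteq> 0" using assms(10) unfolding a2(2) c2(2) sub_line_iff .
  have cc: "span {c1} \<noteq> span {c2}" using assms(6) c1 c2 by simp
  define E where "E = (a1 \<bullet> c1) * (a2 \<bullet> c2) + (a1 \<bullet> c2) * (a2 \<bullet> c1)"
  have H: "harmonic_pair C1 C2 (meet g1 (join C1 C2)) (meet g2 (join C1 C2)) \<longleftrightarrow> E = 0"
    unfolding a1(2) a2(2) c1(2) c2(2) E_def by (rule harm[OF c1(1) c2(1) cc n11 n21 n12 n22])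
  have P: "has_period A n \<longleftrightarrow> n = 4 \<and> E = 0"
    using assms(11) unfolding inscribed_circumscribed_def
  proof (elim disjE)
    assume "alt_polygon g1 g2 C1 C2 A"
    then have "alt_polygon {x. a1 \<bullet> x = 0} {x. a2 \<bullet> x = 0} (span {c1}) (span {c2}) A"
      using a1 a2 c1 c2 by simp
    from alt_core[OF this n11 n21 n12 n22] show ?thesis by (simp add: E_def ac_simps)
  next
    assume "alt_polygon g2 g1 C1 C2 A"
    then have "alt_polygon {x. a2 \<bullet> x = 0} {x. a1 \<bullet> x = 0} (span {c1}) (span {c2}) A"
      using a1 a2 c1 c2 by simp
    from alt_core[OF this n21 n11 n22 n12] show ?thesis by (simp add: E_def ac_simps)
  next
    assume "alt_polygon g1 g2 C2 C1 A"
    then have "alt_polygon {x. a1 \<bullet> x = 0} {x. a2 \<bullet> x = 0} (span {c2}) (span {c1}) A"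
      using a1 a2 c1 c2 by simp
    from alt_core[OF this n12 n22 n11 n21] show ?thesis by (simp add: E_def ac_simps)
  next
    assume "alt_polygon g2 g1 C2 C1 A"
    then have "alt_polygon {x. a2 \<bullet> x = 0} {x. a1 \<bullet> x = 0} (span {c2}) (span {c1}) A"
      using a1 a2 c1 c2 by simp
    from alt_core[OF this n22 n12 n21 n11] show ?thesis by (simp add: E_def ac_simps)
  qed
  show ?thesis using P H by simp
qed

end
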